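(* Let $V$ be an $N$-dimensional vector space over $\mathbb{F}_q$, $\mathcal{F}$ a spanning family in $V$ with projective metric $d_{\mathcal{F}}$, and $\mathcal{C}\subseteq V$ a code with at least two elements and minimum distance $d=d_{\mathcal{F}}(\mathcal{C})$. Then $|\mathcal{C}|\le q^{N-\mu_{\mathcal{F}}(d-1)}\le q^{N-d+1}$.
   Context: A spanning family is a set $\mathcal{F}$ of pairwise linearly independent nonzero vectors with $\langle\mathcal{F}\rangle=V$; $\operatorname{wt}_{\mathcal{F}}(v)=\min\{|I|:I\subseteq\mathcal{F},v\in\langle I\rangle\}$, $d_{\mathcal{F}}(x,y)=\operatorname{wt}_{\mathcal{F}}(y-x)$, and $d_{\mathcal{F}}(\mathcal{C})=\min\{d_{\mathcal{F}}(x,y):x,y\in\mathcal{C},x\neq y\}$. For an integer $0\le t\le N$, $\mu_{\mathcal{F}}(t)$ is the maximum cardinality of a subset $\mathcal{G}\subseteq\mathcal{F}$ whose elements are linearly independent and such that every $v\in\langle\mathcal{G}\rangle$ has $\operatorname{wt}_{\mathcal{F}}(v)\le t$. *)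

theory Defs
  imports "HOL-Analysis.Analysis"
begin

text \<open>The ambient space V is 'a^'n over a finite field 'a, so N = CARD('n), q = CARD('a).
  Linear algebra notions are those of the vector space interpretation vec (scalar mult *s).\<close>

definition spanning_family :: "('a::field ^ 'n) set \<Rightarrow> bool" where
  "spanning_family F \<longleftrightarrow>
     0 \<notin> F \<and>
     (\<forall>x\<in>F. \<forall>y\<in>F. x \<noteq> y \<longrightarrow> vec.independent {x, y}) \<and>
     vec.span F = UNIV"

definition wtF :: "('a::field ^ 'n) set \<Rightarrow> 'a ^ 'n \<Rightarrow> nat" where
  "wtF F v = (LEAST k. \<exists>I. I \<subseteq> F \<and> finite I \<and> card I = k \<and> v \<in> vec.span I)"

definition distF :: "('a::field ^ 'n) set \<Rightarrow> 'a ^ 'n \<Rightarrow> 'a ^ 'n \<Rightarrow> nat" where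
  "distF F x y = wtF F (y - x)"

definition min_distF :: "('a::field ^ 'n) set \<Rightarrow> ('a ^ 'n) set \<Rightarrow> nat" where
  "min_distF F C = Min {distF F x y | x y. x \<in> C \<and> y \<in> C \<and> x \<noteq> y}"

definition muF :: "('a::field ^ 'n) set \<Rightarrow> nat \<Rightarrow> nat" where
  "muF F t = Max {card G | G. G \<subseteq> F \<and> vec.independent G \<and>
                              (\<forall>v\<in>vec.span G. wtF F v \<le> t)}"

end

theory Submission
  imports Defs "HOL-Library.FuncSet"
begin

lemma card_span_le:
  fixes H :: "('a::{finite,field} ^ 'n) set"
  shows "card (vec.span H) \<le> CARD('a) ^ card H"
proof -
  have fH: "finite H" by (rule finite)
  let ?f = "\<lambda>u. \<Sum>v\<in>H. u v *s v"
  have "vec.span H \<subseteq> ?f ` (H \<rightarrow>\<^sub>E (UNIV::'a set))"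
  proof
    fix x assume "x \<in> vec.span H"
    then obtain u where x: "x = ?f u" using vec.span_finite[OF fH] by blast
    let ?u = "restrict u H"
    have e: "?f ?u = ?f u" by (rule sum.cong) simp_all
    show "x \<in> ?f ` (H \<rightarrow>\<^sub>E UNIV)"
    proof (rule image_eqI)
      show "x = ?f ?u" using x e by simp
      show "?u \<in> H \<rightarrow>\<^sub>E UNIV" by simp
    qed
  qed
  then have "card (vec.span H) \<le> card (?f ` (H \<rightarrow>\<^sub>E (UNIV::'a set)))"
    by (rule card_mono[OF finite])
  also have "\<dots> \<le> card (H \<rightarrow>\<^sub>E (UNIV::'a set))" by (rule card_image_le[OF finite])
  also have "\<dots> = CARD('a) ^ card H" by (rule card_funcsetE[OF fH])
  finally show ?thesis .
qed

lemma wtF_le: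
  fixes F :: "('a::{finite,field} ^ 'n) set"
  assumes "I \<subseteq> F" "v \<in> vec.span I"
  shows "wtF F v \<le> card I"
  unfolding wtF_def by (rule Least_le, rule exI[of _ I]) (simp add: assms)

lemma wtF_pos:
  fixes F :: "('a::{finite,field} ^ 'n) set"
  assumes "spanning_family F" "v \<noteq> 0"
  shows "wtF F v \<ge> 1"
proof -
  have ex: "\<exists>I. I \<subseteq> F \<and> finite I \<and> card I = card F \<and> v \<in> vec.span I"
    using assms(1) unfolding spanning_family_def by auto
  have ex2: "\<exists>k. \<exists>I. I \<subseteq> F \<and> finite I \<and> card I = k \<and> v \<in> vec.span I"
    using ex by blast
  from LeastI_ex[OF ex2] obtain I where
    I: "I \<subseteq> F" "finite I" "card I = wtF F v" "v \<in> vec.span I"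
    unfolding wtF_def by blast
  show ?thesis
  proof (rule ccontr)
    assume "\<not> 1 \<le> wtF F v"
    then have "card I = 0" using I by simp
    then have "I = {}" using I(2) by simp
    then show False using I assms(2) by simp
  qed
qed

theorem theorem7p1:
  fixes F :: "('a::{finite,field} ^ 'n) set"
    and C :: "('a ^ 'n) set"
  assumes "spanning_family F"
    and "card C \<ge> 2"
  shows "card C \<le> CARD('a) ^ (CARD('n) - muF F (min_distF F C - 1))
         \<and> CARD('a) ^ (CARD('n) - muF F (min_distF F C - 1))
             \<le> CARD('a) ^ (CARD('n) - min_distF F C + 1)"
proof -
  define d where "d = min_distF F C"
  define N where "N = CARD('n)"
  define q where "q = CARD('a)"
  have q1: "q \<ge> 1" unfolding q_def by (simp add: Suc_leI)
  have spanF: "vec.span F = UNIV" using assms(1) unfolding spanning_family_def by auto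
  obtain B0 where B0: "B0 \<subseteq> F" "vec.independent B0" "F \<subseteq> vec.span B0"
    using vec.maximal_independent_subset_extend[of "{}" F] by (metis empty_subsetI vec.independent_empty)
  have spanB0: "vec.span B0 = UNIV" using B0 spanF
    by (metis top.extremum_uniqueI vec.span_minimal vec.subspace_span)
  have cardB0: "card B0 = N" unfolding N_def
    using vec.basis_card_eq_dim[of B0 UNIV] B0 spanB0 vec_dim_card by auto
  have wtN: "wtF F v \<le> N" for v using wtF_le[OF B0(1), of v] spanB0 cardB0 by auto
  define D where "D = {distF F x y | x y. x \<in> C \<and> y \<in> C \<and> x \<noteq> y}"
  have fD: "finite D"
  proof -
    have "D \<subseteq> {..N}" unfolding D_def distF_def using wtN by auto
    then show ?thesis using finite_subset by blast
  qed
  have d_le: "d \<le> distF F x y" if "x \<in> C" "y \<in> C" "x \<noteq> y" for x y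
    unfolding d_def min_distF_def using that fD D_def by (intro Min_le) auto
  obtain x0 y0 where xy0: "x0 \<in> C" "y0 \<in> C" "x0 \<noteq> y0"
  proof -
    have "\<not> card C \<le> Suc 0" using assms(2) by simp
    then have "\<not> (\<forall>a\<in>C. \<forall>b\<in>C. a = b)" using card_le_Suc0_iff_eq[OF finite, of C] by blast
    then show ?thesis using that by blast
  qed
  have dN: "d \<le> N" using d_le[OF xy0] wtN unfolding distF_def by (meson le_trans)
  define M where "M = {card G | G. G \<subseteq> F \<and> vec.independent G \<and>
                              (\<forall>v\<in>vec.span G. wtF F v \<le> d - 1)}"
  have muM: "muF F (d - 1) = Max M" unfolding muF_def M_def by simp
  have fM: "finite M"
  proof -
    have "M \<subseteq> card ` Pow (UNIV :: ('a^'n) set)" unfolding M_def by auto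
    then show ?thesis by (rule finite_subset) (rule finite_imageI[OF finite])
  qed
  have M0: "0 \<in> M" unfolding M_def
    by (rule CollectI, rule exI[of _ "{}"]) (use wtF_le[of "{}" F] vec.independent_empty in simp)
  obtain G1 where G1: "G1 \<subseteq> B0" "card G1 = d - 1"
  proof -
    have "d - 1 \<le> card B0" using cardB0 dN by simp
    then show ?thesis using obtain_subset_with_card_n[of "d - 1" B0] that by blast
  qed
  have "d - 1 \<in> M" unfolding M_def
  proof (rule CollectI, rule exI[of _ G1], intro conjI ballI)
    show "d - 1 = card G1" using G1 by simp
    show "G1 \<subseteq> F" using G1 B0 by auto
    show "vec.independent G1" using G1 B0 vec.independent_mono by blast
    show "wtF F v \<le> d - 1" if "v \<in> vec.span G1" for v
      using wtF_le[of G1 F v] that G1 B0 by auto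
  qed
  then have mud: "d - 1 \<le> muF F (d - 1)" using muM fM by auto
  have part2: "q ^ (N - muF F (d - 1)) \<le> q ^ (N - d + 1)"
    using mud q1 by (intro power_increasing) auto
  have "muF F (d - 1) \<in> M" using muM fM M0 by (metis Max_in empty_iff)
  then obtain G where G: "G \<subseteq> F" "vec.independent G" "\<forall>v\<in>vec.span G. wtF F v \<le> d - 1"
    "card G = muF F (d - 1)" unfolding M_def by auto
  obtain B where B: "G \<subseteq> B" "vec.independent B" "UNIV \<subseteq> vec.span B"
    using vec.maximal_independent_subset_extend[of G UNIV] G by (metis subset_UNIV)
  have cardB: "card B = N" unfolding N_def
    using vec.basis_card_eq_dim[of B UNIV] B vec_dim_card by auto
  define H where "H = B - G"
  have cardH: "card H = N - muF F (d - 1)" unfolding H_def using card_Diff_subset[OF finite B(1)] cardB G(4) by simp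
  have BGH: "B = G \<union> H" unfolding H_def using B by auto
  have dec: "\<exists>h. h \<in> vec.span H \<and> x - h \<in> vec.span G" for x
  proof -
    have "x \<in> vec.span (G \<union> H)" using B(3) BGH by blast
    then obtain g h where "x = g + h" "g \<in> vec.span G" "h \<in> vec.span H"
      unfolding vec.span_Un by blast
    then show ?thesis by (metis add_diff_cancel_right')
  qed
  define p where "p x = (SOME h. h \<in> vec.span H \<and> x - h \<in> vec.span G)" for x
  have p: "p x \<in> vec.span H \<and> x - p x \<in> vec.span G" for x
    unfolding p_def by (rule someI_ex[OF dec])
  have inj: "inj_on p C"
  proof (rule inj_onI, rule ccontr)
    fix x y assume xy: "x \<in> C" "y \<in> C" "p x = p y" "x \<noteq> y"
    have "(y - p y) - (x - p x) \<in> vec.span G" using p[of x] p[of y] vec.span_diff by blast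
    moreover have "y - x = (y - p y) - (x - p x)" using xy(3) by simp
    ultimately have "y - x \<in> vec.span G" by simp
    then have w: "wtF F (y - x) \<le> d - 1" using G(3) by blast
    have "wtF F (y - x) \<ge> 1" using wtF_pos[OF assms(1), of "y - x"] xy(4) by simp
    moreover have "d \<le> wtF F (y - x)" using d_le[OF xy(1,2,4)] unfolding distF_def .
    ultimately show False using w by linarith
  qed
  have "card C \<le> card (vec.span H)"
    proof (rule card_inj_on_le[OF inj _ finite])
    show "p ` C \<subseteq> vec.span H" using p by blast
  qed
  also have "\<dots> \<le> q ^ card H" unfolding q_def by (rule card_span_le)
  finally have part1: "card C \<le> q ^ (N - muF F (d - 1))" using cardH by simp
  show ?thesis using part1 part2 unfolding d_def N_def q_def by simp
qed

end
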